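(* For any $w, w' \in \mathcal{C}\langle A \rangle$ and any integer $M \ge 1$, \[ Z^{\mathcal{S}, \ast}_{q, M}(w \ast_{\hbar} w')=Z^{\mathcal{S}, \ast}_{q, M}(w)\, Z^{\mathcal{S}, \ast}_{q, M}(w'). \]
   Context: Let $\mathcal{C}=\mathbb{Q}[\hbar]$ with $\hbar$ a formal variable, and let $\mathfrak{H}=\mathcal{C}\langle a,b\rangle$ be the non-commutative polynomial ring in $a,b$ over $\mathcal{C}$. For $k\ge 1$ put $g_k=ba^k$. Let $A=\{\hbar b\}\cup\{ba^k\mid k\ge 1\}$, let $\mathcal{C}\langle A\rangle$ be the $\mathcal{C}$-subalgebra of $\mathfrak{H}$ generated by $1$ and $A$, and let $\mathfrak{z}$ be the $\mathcal{C}$-span of $A$. Fix $q\in\mathbb{C}$ with $0<|q|<1$ and regard $\mathbb{C}$ as a $\mathcal{C}$-module with $\hbar$ acting as multiplication by $1-q$. Let $[m]=(1-q^m)/(1-q)$. For $m\ge 1$ let $F_q(m;\cdot):\mathfrak{z}\to\mathbb{C}$ be the $\mathcal{C}$-linear map with $F_q(m;\hbar b)=1-q$ and $F_q(m;g_k)=q^{km}/[m]^k$ for $k\ge1$. For $M\ge 1$ let $Z_{q,M}:\mathcal{C}\langle A\rangle\to\mathbb{C}$ be the $\mathcal{C}$-linear map with $Z_{q,M}(1)=1$ and $Z_{q,M}(u_1\cdots u_r)=\sum_{0<m_1<\cdots<m_r<M}\prod_{i=1}^r F_q(m_i;u_i)$ for $u_1,\dots,u_r\in A$. Let $\circ_\hbar:\mathfrak{z}\times\mathfrak{z}\to\mathfrak{z}$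 be the symmetric $\mathcal{C}$-bilinear map with $(\hbar b)\circ_\hbar(\hbar b)=\hbar\cdot \hbar b$, $(\hbar b)\circ_\hbar g_k=\hbar g_k$, $g_k\circ_\hbar g_l=g_{k+l}$ ($k,l\ge1$). The harmonic product $\ast_\hbar$ on $\mathcal{C}\langle A\rangle$ is the $\mathcal{C}$-bilinear product determined by $w\ast_\hbar 1=1\ast_\hbar w=w$ and $(wu)\ast_\hbar(w'v)=(w\ast_\hbar w'v)u+(wu\ast_\hbar w')v+(w\ast_\hbar w')(u\circ_\hbar v)$ for $w,w'\in\mathcal{C}\langle A\rangle$, $u,v\in A$. Let $\psi^\ast$ be the $\mathcal{C}$-algebra anti-involution of $\mathcal{C}\langle A\rangle$ with $\psi^\ast(\hbar b)=\hbar b$ and $\psi^\ast(ba^k)=b(-a)^k$ for $k\ge1$. Define the $\mathcal{C}$-linear map $w^{\mathcal{S},\ast}_\hbar:\mathcal{C}\langle A\rangle\to\mathcal{C}\langle A\rangle$ by $w^{\mathcal{S},\ast}_\hbar(1)=1$ and $w^{\mathcal{S},\ast}_\hbar(u_1\cdots u_r)=\sum_{i=0}^r (u_1\cdots u_i)\ast_\hbar \psi^\ast(u_{i+1}\cdots u_r)$ for $r\ge1$, $u_1,\dots,u_r\in A$, and set $Z^{\mathcal{S},\ast}_{q,M}=Z_{q,M}\circ w^{\mathcal{S},\ast}_\hbar$. *)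

theory Defs
  imports Complex_Main "HOL-Library.Poly_Mapping" "HOL-Computational_Algebra.Polynomial"
begin

text \<open>Coefficient ring C = Q[hbar] is rat poly; hbar = [:0,1:].
  The alphabet A is encoded by natural numbers: letter 0 stands for hbar*b,
  letter k (k >= 1) stands for g_k = b a^k.  C<A> is the free C-module on
  words over A (nat list), represented as finitely supported maps.\<close>

type_synonym CA = "nat list \<Rightarrow>\<^sub>0 rat poly"

definition hbar :: "rat poly" where "hbar = [:0, 1:]"

definition mono :: "nat list \<Rightarrow> CA" where
  "mono u = Poly_Mapping.single u 1"

definition scaleC :: "rat poly \<Rightarrow> CA \<Rightarrow> CA" where
  "scaleC c x = Poly_Mapping.map (\<lambda>a. c * a) x"

definition linext :: "(nat list \<Rightarrow> CA) \<Rightarrow> CA \<Rightarrow> CA" where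
  "linext f x = (\<Sum>u\<in>Poly_Mapping.keys x. scaleC (Poly_Mapping.lookup x u) (f u))"

definition bilinext :: "(nat list \<Rightarrow> nat list \<Rightarrow> CA) \<Rightarrow> CA \<Rightarrow> CA \<Rightarrow> CA" where
  "bilinext f x y = (\<Sum>u\<in>Poly_Mapping.keys x. \<Sum>v\<in>Poly_Mapping.keys y. scaleC (Poly_Mapping.lookup x u * Poly_Mapping.lookup y v) (f u v))"

definition append_right :: "CA \<Rightarrow> nat list \<Rightarrow> CA" where
  "append_right x s = linext (\<lambda>u. mono (u @ s)) x"

text \<open>u circ_hbar v as an element of z: coefficient times a letter.\<close>
definition circ_coeff :: "nat \<Rightarrow> nat \<Rightarrow> rat poly" where
  "circ_coeff u v = (if u = 0 \<or> v = 0 then hbar else 1)"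

definition circ_letter :: "nat \<Rightarrow> nat \<Rightarrow> nat" where
  "circ_letter u v = u + v"

text \<open>Harmonic product of two words, computed on the reversed words
  (so that the recursion peels off the last letters).\<close>
fun harm_rev :: "nat list \<Rightarrow> nat list \<Rightarrow> CA" where
  "harm_rev [] y = mono (rev y)"
| "harm_rev (u # x) [] = mono (rev (u # x))"
| "harm_rev (u # x) (v # y) =
     append_right (harm_rev x (v # y)) [u]
   + append_right (harm_rev (u # x) y) [v]
   + scaleC (circ_coeff u v) (append_right (harm_rev x y) [circ_letter u v])"

definition harm_word :: "nat list \<Rightarrow> nat list \<Rightarrow> CA" where
  "harm_word x y = harm_rev (rev x) (rev y)"

definition harm :: "CA \<Rightarrow> CA \<Rightarrow> CA" where
  "harm x y = bilinext harm_word x y"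

definition psi_star :: "CA \<Rightarrow> CA" where
  "psi_star x = linext (\<lambda>u. scaleC ((-1) ^ sum_list u) (mono (rev u))) x"

definition wS_word :: "nat list \<Rightarrow> CA" where
  "wS_word us = (if us = [] then mono []
     else (\<Sum>i\<in>{0..length us}. harm (mono (take i us)) (psi_star (mono (drop i us)))))"

definition wS :: "CA \<Rightarrow> CA" where
  "wS x = linext wS_word x"

definition qint :: "complex \<Rightarrow> nat \<Rightarrow> complex" where
  "qint q m = (1 - q ^ m) / (1 - q)"

definition Fq :: "complex \<Rightarrow> nat \<Rightarrow> nat \<Rightarrow> complex" where
  "Fq q m k = (if k = 0 then 1 - q else q ^ (k * m) / (qint q m) ^ k)"

definition evalC :: "complex \<Rightarrow> rat poly \<Rightarrow> complex" where
  "evalC q c = poly (map_poly of_rat c) (1 - q)"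

definition Zq_word :: "complex \<Rightarrow> nat \<Rightarrow> nat list \<Rightarrow> complex" where
  "Zq_word q M us =
     (\<Sum>ms\<in>{ms. length ms = length us \<and> sorted_wrt (<) ms \<and> (\<forall>m\<in>set ms. 0 < m \<and> m < M)}.
        prod_list (map2 (Fq q) ms us))"

definition Zq :: "complex \<Rightarrow> nat \<Rightarrow> CA \<Rightarrow> complex" where
  "Zq q M x = (\<Sum>u\<in>Poly_Mapping.keys x. evalC q (Poly_Mapping.lookup x u) * Zq_word q M u)"

definition ZSq :: "complex \<Rightarrow> nat \<Rightarrow> CA \<Rightarrow> complex" where
  "ZSq q M x = Zq q M (wS x)"

end

theory Submission
  imports Defs
begin

lemma evalC_pCons: "evalC q (pCons a p) = of_rat a + (1 - q) * evalC q p"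
  unfolding evalC_def by (simp add: map_poly_pCons)

lemma evalC_0 [simp]: "evalC q 0 = 0"
  unfolding evalC_def by simp

lemma evalC_1 [simp]: "evalC q 1 = 1"
  unfolding evalC_def by simp

lemma evalC_add: "evalC q (a + b) = evalC q a + evalC q b"
  by (induction a b rule: poly_induct2) (simp_all add: evalC_pCons algebra_simps of_rat_add)

lemma evalC_smult: "evalC q (smult a r) = of_rat a * evalC q r"
  unfolding evalC_def by (simp add: map_poly_smult of_rat_mult)

lemma evalC_mult: "evalC q (a * b) = evalC q a * evalC q b"
proof (induction a)
  case 0 then show ?case by simp
next
  case (pCons a p) then show ?case
    by (simp add: evalC_pCons evalC_add evalC_smult mult_pCons_left algebra_simps)
qed

lemma evalC_uminus: "evalC q (- a) = - evalC q a"
  using evalC_add[of q a "-a"] by (simp add: eq_neg_iff_add_eq_0 add.commute)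

lemma evalC_power: "evalC q (a ^ k) = evalC q a ^ k"
  by (induction k) (simp_all add: evalC_mult)

lemma evalC_m1pow: "evalC q ((-1) ^ k) = (-1) ^ k"
  by (simp add: evalC_power evalC_uminus)

lemma evalC_hbar: "evalC q hbar = 1 - q"
  unfolding evalC_def hbar_def by (simp add: map_poly_pCons)

section \<open>Linear functionals\<close>

definition Lf :: "complex \<Rightarrow> (nat list \<Rightarrow> complex) \<Rightarrow> CA \<Rightarrow> complex" where
  "Lf q f X = (\<Sum>u\<in>Poly_Mapping.keys X. evalC q (Poly_Mapping.lookup X u) * f u)"

lemma Lf_superset:
  assumes "finite S" "Poly_Mapping.keys X \<subseteq> S"
  shows "Lf q f X = (\<Sum>u\<in>S. evalC q (Poly_Mapping.lookup X u) * f u)"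
  unfolding Lf_def
  by (rule sum.mono_neutral_left) (use assms in \<open>auto simp: in_keys_iff\<close>)

lemma lookup_scaleC: "Poly_Mapping.lookup (scaleC c X) u = c * Poly_Mapping.lookup X u"
  unfolding scaleC_def by (simp add: map.rep_eq when_def)

lemma keys_scaleC: "Poly_Mapping.keys (scaleC c X) \<subseteq> Poly_Mapping.keys X"
  by (auto simp: in_keys_iff lookup_scaleC)

lemma Lf_add: "Lf q f (X + Y) = Lf q f X + Lf q f Y"
proof -
  let ?S = "Poly_Mapping.keys X \<union> Poly_Mapping.keys Y"
  have "Lf q f (X + Y) = (\<Sum>u\<in>?S. evalC q (Poly_Mapping.lookup (X+Y) u) * f u)"
    by (rule Lf_superset) (use keys_add[of X Y] in auto)
  also have "\<dots> = (\<Sum>u\<in>?S. evalC q (Poly_Mapping.lookup X u) * f u) + (\<Sum>u\<in>?S. evalC q (Poly_Mapping.lookup Y u) * f u)"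
    by (simp add: lookup_add evalC_add distrib_right sum.distrib)
  also have "\<dots> = Lf q f X + Lf q f Y"
    by (simp add: Lf_superset[symmetric])
  finally show ?thesis .
qed

lemma Lf_zero [simp]: "Lf q f 0 = 0"
  unfolding Lf_def by simp

lemma Lf_scaleC: "Lf q f (scaleC c X) = evalC q c * Lf q f X"
proof -
  have "Lf q f (scaleC c X) = (\<Sum>u\<in>Poly_Mapping.keys X. evalC q (Poly_Mapping.lookup (scaleC c X) u) * f u)"
    by (rule Lf_superset) (auto simp: keys_scaleC[THEN subsetD])
  then show ?thesis by (simp add: Lf_def lookup_scaleC evalC_mult sum_distrib_left mult.assoc)
qed

lemma Lf_sum: "Lf q f (\<Sum>i\<in>I. X i) = (\<Sum>i\<in>I. Lf q f (X i))"
  by (induction I rule: infinite_finite_induct) (simp_all add: Lf_add)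

lemma Lf_mono [simp]: "Lf q f (mono w) = f w"
  unfolding Lf_def mono_def by simp

lemma Lf_linext: "Lf q f (linext g X) = Lf q (\<lambda>w. Lf q f (g w)) X"
proof -
  have "Lf q f (linext g X) = (\<Sum>u\<in>Poly_Mapping.keys X. evalC q (Poly_Mapping.lookup X u) * Lf q f (g u))"
    unfolding linext_def by (simp add: Lf_sum Lf_scaleC)
  then show ?thesis unfolding Lf_def[of q "\<lambda>w. Lf q f (g w)" X] .
qed

lemma Lf_append_right: "Lf q f (append_right X s) = Lf q (\<lambda>w. f (w @ s)) X"
  unfolding append_right_def by (simp add: Lf_linext)

lemma Lf_cong: "(\<And>w. f w = g w) \<Longrightarrow> Lf q f X = Lf q g X"
  by (simp add: Lf_def)

lemma Lf_fun_add: "Lf q (\<lambda>w. f w + g w) X = Lf q f X + Lf q g X"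
  by (simp add: Lf_def distrib_left sum.distrib)

lemma Lf_fun_cmult: "Lf q (\<lambda>w. c * f w) X = c * Lf q f X"
  by (simp add: Lf_def sum_distrib_left algebra_simps)

lemma Lf_fun_sum: "Lf q (\<lambda>w. \<Sum>i\<in>I. f i w) X = (\<Sum>i\<in>I. Lf q (f i) X)"
  unfolding Lf_def by (simp add: sum_distrib_left sum.swap[of _ I])

lemma Lf_harm: "Lf q f (harm X Y) = Lf q (\<lambda>p. Lf q (\<lambda>s. Lf q f (harm_word p s)) Y) X"
proof -
  have "Lf q f (harm X Y) = (\<Sum>u\<in>Poly_Mapping.keys X. \<Sum>v\<in>Poly_Mapping.keys Y. evalC q (Poly_Mapping.lookup X u) * (evalC q (Poly_Mapping.lookup Y v) * Lf q f (harm_word u v)))"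
    unfolding harm_def bilinext_def by (simp add: Lf_sum Lf_scaleC evalC_mult mult_ac)
  then show ?thesis
    by (simp add: Lf_def[of q _ X] Lf_def[of q _ Y] sum_distrib_left)
qed

lemma hw_Nil_left [simp]: "harm_word [] y = mono y"
  unfolding harm_word_def by simp

lemma hw_Nil_right [simp]: "harm_word x [] = mono x"
proof -
  have "harm_rev r [] = mono (rev r)" for r by (cases r) auto
  then show ?thesis by (simp add: harm_word_def)
qed

lemma hw_snoc: "harm_word (x @ [u]) (y @ [v]) =
   append_right (harm_word x (y @ [v])) [u] + append_right (harm_word (x @ [u]) y) [v]
   + scaleC (circ_coeff u v) (append_right (harm_word x y) [u + v])"
  unfolding harm_word_def by (simp add: circ_letter_def)

lemma take_snoc_le: "i \<le> length x \<Longrightarrow> take i (x @ [u]) = take i x"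
  by simp

lemma drop_snoc_le: "i \<le> length x \<Longrightarrow> drop i (x @ [u]) = drop i x @ [u]"
  by simp

definition chr :: "complex \<Rightarrow> (nat list \<Rightarrow> complex) \<Rightarrow> bool" where
  "chr q f \<longleftrightarrow> (\<forall>a b. Lf q f (harm_word a b) = f a * f b)"

definition eps :: "nat list \<Rightarrow> complex" where
  "eps w = (if w = [] then 1 else 0)"

lemma Lf_eps_AR: "Lf q eps (append_right X [u]) = 0"
  unfolding Lf_append_right by (simp add: eps_def Lf_def)

lemma eps_char: "chr q eps"
  unfolding chr_def
proof (intro allI)
  fix a b :: "nat list"
  show "Lf q eps (harm_word a b) = eps a * eps b"
  proof (cases a rule: rev_cases)
    case Nil then show ?thesis by (simp add: eps_def)
  next
    case (snoc x u)
    show ?thesis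
    proof (cases b rule: rev_cases)
      case Nil then show ?thesis by (simp add: eps_def)
    next
      case (snoc y v)
      then show ?thesis using \<open>a = x @ [u]\<close>
        by (simp add: hw_snoc Lf_add Lf_scaleC Lf_eps_AR eps_def)
    qed
  qed
qed

definition phi :: "(nat \<Rightarrow> complex) \<Rightarrow> nat list \<Rightarrow> complex" where
  "phi F w = (if w = [] then 1 else if length w = 1 then F (hd w) else 0)"

lemma phi_snoc: "phi F (w @ [u]) = F u * eps w"
  by (cases w) (auto simp: phi_def eps_def)

lemma phi_char:
  assumes F: "\<And>u v. F u * F v = evalC q (circ_coeff u v) * F (u + v)"
  shows "chr q (phi F)"
  unfolding chr_def
proof (intro allI)
  fix a b :: "nat list"
  show "Lf q (phi F) (harm_word a b) = phi F a * phi F b"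
  proof (cases a rule: rev_cases)
    case Nil then show ?thesis by (simp add: phi_def)
  next
    case (snoc x u)
    show ?thesis
    proof (cases b rule: rev_cases)
      case Nil then show ?thesis by (simp add: phi_def)
    next
      case (snoc y v)
      have e: "\<And>a b. Lf q eps (harm_word a b) = eps a * eps b"
        using eps_char unfolding chr_def by blast
      have "Lf q (phi F) (harm_word a b) = F u * (eps x * eps (y @ [v])) + F v * (eps (x @ [u]) * eps y)
          + evalC q (circ_coeff u v) * (F (u + v) * (eps x * eps y))"
        using \<open>a = x @ [u]\<close> snoc
        by (simp add: hw_snoc Lf_add Lf_scaleC Lf_append_right phi_snoc Lf_fun_cmult e)
      also have "\<dots> = phi F a * phi F b"
        using \<open>a = x @ [u]\<close> snoc F[of u v]
        by (simp add: eps_def phi_snoc mult_ac)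
      finally show ?thesis .
    qed
  qed
qed

section \<open>Deconcatenation\<close>

definition D :: "complex \<Rightarrow> (nat list \<Rightarrow> nat list \<Rightarrow> complex) \<Rightarrow> CA \<Rightarrow> complex" where
  "D q h X = Lf q (\<lambda>w. \<Sum>i\<in>{0..length w}. h (take i w) (drop i w)) X"

definition L2 :: "complex \<Rightarrow> (nat list \<Rightarrow> nat list \<Rightarrow> complex) \<Rightarrow> CA \<Rightarrow> CA \<Rightarrow> complex" where
  "L2 q h X Y = Lf q (\<lambda>p. Lf q (\<lambda>s. h p s) Y) X"

lemma D_AR: "D q h (append_right X [u]) = D q (\<lambda>p s. h p (s @ [u])) X + Lf q (\<lambda>p. h (p @ [u]) []) X"
proof -
  have "(\<Sum>i\<in>{0..length (w @ [u])}. h (take i (w @ [u])) (drop i (w @ [u])))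
      = (\<Sum>i\<in>{0..length w}. h (take i w) (drop i w @ [u])) + h (w @ [u]) []" for w
    by (simp add: sum.atLeast0_atMost_Suc)
  then show ?thesis
    unfolding D_def Lf_append_right by (simp add: Lf_fun_add)
qed

lemma D_add: "D q h (X + Y) = D q h X + D q h Y"
  unfolding D_def by (simp add: Lf_add)

lemma D_scaleC: "D q h (scaleC c X) = evalC q c * D q h X"
  unfolding D_def by (simp add: Lf_scaleC)

lemma L2_add: "L2 q h P (X + Y) = L2 q h P X + L2 q h P Y"
  unfolding L2_def by (simp add: Lf_add Lf_fun_add)

lemma L2_scaleC: "L2 q h P (scaleC c X) = evalC q c * L2 q h P X"
  unfolding L2_def by (simp add: Lf_scaleC Lf_fun_cmult)

lemma L2_AR: "L2 q h P (append_right X [u]) = L2 q (\<lambda>p s. h p (s @ [u])) P X"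
  unfolding L2_def by (simp add: Lf_append_right)

lemma L2_mono_mono [simp]: "L2 q h (mono p) (mono s) = h p s"
  unfolding L2_def by simp

lemma L2_mono_Nil: "L2 q h P (mono []) = Lf q (\<lambda>p. h p []) P"
  unfolding L2_def by simp

lemma Delta_lemma:
  "D q h (harm_word a b) = (\<Sum>i\<in>{0..length a}. \<Sum>j\<in>{0..length b}.
      L2 q h (harm_word (take i a) (take j b)) (harm_word (drop i a) (drop j b)))"
proof (induction "length a + length b" arbitrary: a b h rule: less_induct)
  case less
  show ?case
  proof (cases a rule: rev_cases)
    case Nil then show ?thesis by (simp add: D_def)
  next
    case (snoc x u)
    show ?thesis
    proof (cases b rule: rev_cases)
      case Nil then show ?thesis using snoc by (simp add: D_def del: append_assoc)
    next
      case (snoc y v)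
      note a = \<open>a = x @ [u]\<close> and b = \<open>b = y @ [v]\<close>
      define n where "n = length x"
      define m where "m = length y"
      define c where "c = evalC q (circ_coeff u v)"
      define hu where "hu = (\<lambda>p s. h p (s @ [u]))"
      define hv where "hv = (\<lambda>p s. h p (s @ [v]))"
      define huv where "huv = (\<lambda>p s. h p (s @ [u + v]))"
      define T where "T = (\<lambda>i j. L2 q h (harm_word (take i a) (take j b)) (harm_word (drop i a) (drop j b)))"
      define A where "A = (\<lambda>i j. L2 q hu (harm_word (take i x) (take j y)) (harm_word (drop i x) (drop j y @ [v])))"
      define B where "B = (\<lambda>i j. L2 q hv (harm_word (take i x) (take j y)) (harm_word (drop i x @ [u]) (drop j y)))"
      define C where "C = (\<lambda>i j. L2 q huv (harm_word (take i x) (take j y)) (harm_word (drop i x) (drop j y)))"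
      have la: "length a = Suc n" using a n_def by simp
      have lb: "length b = Suc m" using b m_def by simp
      have Tij: "T i j = A i j + B i j + c * C i j" if "i \<le> n" "j \<le> m" for i j
        using that unfolding T_def A_def B_def C_def a b n_def m_def c_def hu_def hv_def huv_def
        by (simp add: hw_snoc L2_add L2_scaleC L2_AR del: append_assoc)
      have Tim: "T i (Suc m) = L2 q hu (harm_word (take i x) b) (harm_word (drop i x) [])" if "i \<le> n" for i
        using that unfolding T_def a n_def hu_def lb[symmetric]
        by (simp add: L2_def del: append_assoc)
      have Tnj: "T (Suc n) j = L2 q hv (harm_word a (take j y)) (harm_word [] (drop j y))" if "j \<le> m" for j
        using that unfolding T_def b m_def hv_def la[symmetric]
        by (simp add: L2_def del: append_assoc)
      have Tnm: "T (Suc n) (Suc m) = Lf q (\<lambda>p. h p []) (harm_word a b)"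
        unfolding T_def la[symmetric] lb[symmetric] by (simp add: L2_mono_Nil)
      have IH1: "D q hu (harm_word x b) = (\<Sum>i\<in>{0..n}. (\<Sum>j\<in>{0..m}. A i j) + T i (Suc m))"
      proof -
        have "D q hu (harm_word x b) = (\<Sum>i\<in>{0..n}. \<Sum>j\<in>{0..Suc m}.
            L2 q hu (harm_word (take i x) (take j b)) (harm_word (drop i x) (drop j b)))"
          using less.hyps[of x b hu] a lb n_def by simp
        also have "\<dots> = (\<Sum>i\<in>{0..n}. (\<Sum>j\<in>{0..m}. A i j) + T i (Suc m))"
          by (intro sum.cong refl)
             (simp add: sum.atLeast0_atMost_Suc A_def Tim[unfolded m_def b] b m_def del: append_assoc)
        finally show ?thesis .
      qed
      have IH2: "D q hv (harm_word a y) = (\<Sum>i\<in>{0..n}. \<Sum>j\<in>{0..m}. B i j) + (\<Sum>j\<in>{0..m}. T (Suc n) j)"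
      proof -
        have "D q hv (harm_word a y) = (\<Sum>i\<in>{0..Suc n}. \<Sum>j\<in>{0..m}.
            L2 q hv (harm_word (take i a) (take j y)) (harm_word (drop i a) (drop j y)))"
          using less.hyps[of a y hv] b la m_def by simp
        moreover have "(\<Sum>j\<in>{0..m}. T (Suc n) j) = (\<Sum>j\<in>{0..m}. L2 q hv (harm_word a (take j y)) (harm_word [] (drop j y)))"
          by (rule sum.cong) (simp_all add: Tnj)
        ultimately show ?thesis
          by (simp add: sum.atLeast0_atMost_Suc B_def a n_def del: append_assoc)
      qed
      have IH3: "D q huv (harm_word x y) = (\<Sum>i\<in>{0..n}. \<Sum>j\<in>{0..m}. C i j)"
        using less.hyps[of x y huv] a b n_def m_def by (simp add: C_def)
      have LHS: "D q h (harm_word a b) = D q hu (harm_word x b) + D q hv (harm_word a y)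
          + c * D q huv (harm_word x y) + Lf q (\<lambda>p. h p []) (harm_word a b)"
        unfolding a b hu_def hv_def huv_def c_def
        by (simp add: hw_snoc D_add D_scaleC D_AR Lf_add Lf_scaleC Lf_append_right algebra_simps
            del: append_assoc)
      have RHS: "(\<Sum>i\<in>{0..length a}. \<Sum>j\<in>{0..length b}. T i j)
         = (\<Sum>i\<in>{0..n}. \<Sum>j\<in>{0..m}. T i j) + (\<Sum>i\<in>{0..n}. T i (Suc m))
           + (\<Sum>j\<in>{0..m}. T (Suc n) j) + T (Suc n) (Suc m)"
        unfolding la lb by (simp add: sum.atLeast0_atMost_Suc sum.distrib)
      have "(\<Sum>i\<in>{0..n}. \<Sum>j\<in>{0..m}. T i j) = (\<Sum>i\<in>{0..n}. \<Sum>j\<in>{0..m}. A i j)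
          + (\<Sum>i\<in>{0..n}. \<Sum>j\<in>{0..m}. B i j) + c * (\<Sum>i\<in>{0..n}. \<Sum>j\<in>{0..m}. C i j)"
        by (simp add: Tij sum.distrib sum_distrib_left)
      then have "(\<Sum>i\<in>{0..length a}. \<Sum>j\<in>{0..length b}. T i j) = D q h (harm_word a b)"
        unfolding RHS LHS IH1 IH2 IH3 Tnm by (simp add: sum.distrib algebra_simps)
      then show ?thesis unfolding T_def by simp
    qed
  qed
qed

section \<open>Convolution of characters\<close>

definition conv :: "(nat list \<Rightarrow> complex) \<Rightarrow> (nat list \<Rightarrow> complex) \<Rightarrow> nat list \<Rightarrow> complex" where
  "conv f g w = (\<Sum>i\<in>{0..length w}. f (take i w) * g (drop i w))"

lemma Lf_fun_multc: "Lf q (\<lambda>w. f w * c) X = Lf q f X * c"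
  unfolding Lf_def by (simp add: sum_distrib_right mult.assoc)

lemma phi_Nil [simp]: "phi F [] = 1"
  by (simp add: phi_def)

lemma L2_tensor: "L2 q (\<lambda>p s. f p * g s) X Y = Lf q f X * Lf q g Y"
proof -
  have "L2 q (\<lambda>p s. f p * g s) X Y = Lf q (\<lambda>p. Lf q g Y * f p) X"
    unfolding L2_def by (simp add: Lf_fun_cmult mult.commute)
  then show ?thesis by (metis Lf_fun_cmult mult.commute)
qed

lemma conv_char:
  assumes "chr q f" "chr q g"
  shows "chr q (conv f g)"
  unfolding chr_def
proof (intro allI)
  fix a b
  have "Lf q (conv f g) (harm_word a b) = D q (\<lambda>p s. f p * g s) (harm_word a b)"
    unfolding conv_def D_def ..
  also have "\<dots> = (\<Sum>i\<in>{0..length a}. \<Sum>j\<in>{0..length b}.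
      (f (take i a) * f (take j b)) * (g (drop i a) * g (drop j b)))"
    using assms unfolding Delta_lemma L2_tensor chr_def by simp
  also have "\<dots> = conv f g a * conv f g b"
    unfolding conv_def sum_product by (simp add: mult_ac)
  finally show "Lf q (conv f g) (harm_word a b) = conv f g a * conv f g b" .
qed

lemma Lf_harm_chr:
  assumes "chr q f"
  shows "Lf q f (harm X Y) = Lf q f X * Lf q f Y"
proof -
  have "Lf q f (harm X Y) = Lf q (\<lambda>p. Lf q f Y * f p) X"
    unfolding Lf_harm using assms unfolding chr_def by (simp add: Lf_fun_cmult mult.commute)
  then show ?thesis by (metis Lf_fun_cmult mult.commute)
qed

lemma conv_phi_right_Nil: "conv f (phi F) [] = f []"
  by (simp add: conv_def phi_def)

lemma conv_phi_right_snoc: "conv f (phi F) (w @ [u]) = f (w @ [u]) + f w * F u"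
proof -
  have "conv f (phi F) (w @ [u]) = (\<Sum>i\<in>{0..length w}. f (take i (w @ [u])) * phi F (drop i (w @ [u]))) + f (w @ [u])"
    unfolding conv_def by (simp add: sum.atLeast0_atMost_Suc)
  also have "(\<Sum>i\<in>{0..length w}. f (take i (w @ [u])) * phi F (drop i (w @ [u])))
      = (\<Sum>i\<in>{0..length w}. if i = length w then f w * F u else 0)"
    by (rule sum.cong) (auto simp: phi_snoc eps_def simp del: append_assoc)
  finally show ?thesis by simp
qed

lemma phi_Cons: "phi F (u # w) = F u * eps w"
  by (simp add: phi_def eps_def)

lemma conv_phi_left_Nil: "conv (phi F) g [] = g []"
  by (simp add: conv_def phi_def)

lemma conv_phi_left_Cons: "conv (phi F) g (u # v) = g (u # v) + F u * g v"
proof -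
  have "conv (phi F) g (u # v) = g (u # v) + (\<Sum>i\<in>{0..length v}. phi F (u # take i v) * g (drop i v))"
    unfolding conv_def length_Cons sum.atLeast0_atMost_Suc_shift by (simp add: phi_Cons)
  also have "(\<Sum>i\<in>{0..length v}. phi F (u # take i v) * g (drop i v))
      = (\<Sum>i\<in>{0..length v}. if i = 0 then F u * g v else 0)"
    by (rule sum.cong) (auto simp: phi_Cons eps_def)
  also have "\<dots> = F u * g v" by simp
  finally show ?thesis by simp
qed

section \<open>Recursion for truncated sums\<close>

definition Sset :: "nat \<Rightarrow> nat \<Rightarrow> nat list set" where
  "Sset M n = {ms. length ms = n \<and> sorted_wrt (<) ms \<and> (\<forall>m\<in>set ms. 0 < m \<and> m < M)}"

lemma Zq_word_alt: "Zq_word q M us = (\<Sum>ms\<in>Sset M (length us). prod_list (map2 (Fq q) ms us))"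
  by (simp add: Zq_word_def Sset_def)

lemma finite_Sset: "finite (Sset M n)"
proof (rule finite_subset)
  show "Sset M n \<subseteq> {ms. set ms \<subseteq> {0..<M} \<and> length ms = n}"
    by (auto simp: Sset_def)
  show "finite {ms. set ms \<subseteq> {0..<M} \<and> length ms = n}"
    by (rule finite_lists_length_eq) simp
qed

lemma Zq_word_Nil [simp]: "Zq_word q M [] = 1"
proof -
  have "Sset M 0 = {[]}" by (auto simp: Sset_def)
  then show ?thesis by (simp add: Zq_word_alt)
qed

lemma Sset_small: "M \<le> 1 \<Longrightarrow> Sset M (Suc n) = {}"
proof (auto simp: Sset_def)
  fix x :: "nat list" assume "M \<le> Suc 0" "length x = Suc n"
  then have "hd x \<in> set x" by (cases x) auto
  moreover have "hd x = 0 \<or> \<not> hd x < M" using \<open>M \<le> Suc 0\<close> by auto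
  ultimately show "\<exists>m\<in>set x. m = 0 \<or> \<not> m < M" by blast
qed

lemma Sset_split:
  assumes "M \<ge> 1"
  shows "Sset (Suc M) (Suc n) = Sset M (Suc n) \<union> (\<lambda>ms. ms @ [M]) ` Sset M n"
proof (intro equalityI subsetI)
  fix ms assume "ms \<in> Sset (Suc M) (Suc n)"
  then have len: "length ms = Suc n" and so: "sorted_wrt (<) ms" and bd: "\<forall>m\<in>set ms. 0 < m \<and> m < Suc M"
    by (auto simp: Sset_def)
  obtain xs l where ms: "ms = xs @ [l]" using len by (cases ms rule: rev_cases) auto
  show "ms \<in> Sset M (Suc n) \<union> (\<lambda>ms. ms @ [M]) ` Sset M n"
  proof (cases "l = M")
    case True
    then have "xs \<in> Sset M n" using len so bd unfolding ms Sset_def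
      by (auto simp: sorted_wrt_append)
    then show ?thesis using True ms by auto
  next
    case False
    then have "ms \<in> Sset M (Suc n)" using len so bd unfolding ms Sset_def
      by (auto simp: sorted_wrt_append less_Suc_eq)
    then show ?thesis by auto
  qed
next
  fix ms assume "ms \<in> Sset M (Suc n) \<union> (\<lambda>ms. ms @ [M]) ` Sset M n"
  then show "ms \<in> Sset (Suc M) (Suc n)"
    using assms by (auto simp: Sset_def sorted_wrt_append less_Suc_eq)
qed

definition Fp :: "complex \<Rightarrow> nat \<Rightarrow> nat \<Rightarrow> complex" where
  "Fp q M u = (if M = 0 then 0 else Fq q M u)"

lemma Zq_word_Suc: "Zq_word q (Suc M) (w @ [u]) = Zq_word q M (w @ [u]) + Zq_word q M w * Fp q M u"
proof (cases "M = 0")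
  case True
  then show ?thesis by (simp add: Zq_word_alt Sset_small Fp_def)
next
  case False
  then have M1: "M \<ge> 1" by simp
  have disj: "Sset M (Suc (length w)) \<inter> (\<lambda>ms. ms @ [M]) ` Sset M (length w) = {}"
    by (auto simp: Sset_def)
  have inj: "inj_on (\<lambda>ms. ms @ [M]) (Sset M (length w))"
    by (auto simp: inj_on_def)
  have "Zq_word q (Suc M) (w @ [u]) = (\<Sum>ms\<in>Sset M (Suc (length w)). prod_list (map2 (Fq q) ms (w @ [u])))
      + (\<Sum>ms\<in>(\<lambda>ms. ms @ [M]) ` Sset M (length w). prod_list (map2 (Fq q) ms (w @ [u])))"
    unfolding Zq_word_alt using Sset_split[OF M1, of "length w"] disj
    by (simp add: sum.union_disjoint finite_Sset)
  also have "(\<Sum>ms\<in>(\<lambda>ms. ms @ [M]) ` Sset M (length w). prod_list (map2 (Fq q) ms (w @ [u])))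
      = (\<Sum>ms\<in>Sset M (length w). prod_list (map2 (Fq q) ms w) * Fq q M u)"
    by (simp add: sum.reindex[OF inj]) (rule sum.cong, auto simp: Sset_def)
  finally show ?thesis using False
    by (simp add: Zq_word_alt Fp_def sum_distrib_right)
qed

lemma Zq_word_0: "Zq_word q 0 w = eps w"
  by (cases w) (simp add: eps_def, simp add: eps_def Zq_word_alt Sset_small)

lemma Fp_circ: "Fp q M u * Fp q M v = evalC q (circ_coeff u v) * Fp q M (u + v)"
  unfolding Fp_def Fq_def circ_coeff_def
  by (auto simp: power_add add_mult_distrib evalC_hbar)

lemma Zq_char: "chr q (Zq_word q M)"
proof (induction M)
  case 0
  have "Zq_word q 0 = eps" by (rule ext) (simp add: Zq_word_0)
  then show ?case using eps_char by simp
next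
  case (Suc M)
  have "Zq_word q (Suc M) = conv (Zq_word q M) (phi (Fp q M))"
  proof (rule ext)
    fix w show "Zq_word q (Suc M) w = conv (Zq_word q M) (phi (Fp q M)) w"
      by (cases w rule: rev_cases) (simp_all add: conv_phi_right_Nil conv_phi_right_snoc Zq_word_Suc)
  qed
  then show ?case using conv_char[OF Suc phi_char[OF Fp_circ]] by simp
qed

definition Zp :: "complex \<Rightarrow> nat \<Rightarrow> nat list \<Rightarrow> complex" where
  "Zp q M v = (-1) ^ sum_list v * Zq_word q M (rev v)"

definition Fpp :: "complex \<Rightarrow> nat \<Rightarrow> nat \<Rightarrow> complex" where
  "Fpp q M u = (-1) ^ u * Fp q M u"

lemma Fpp_circ: "Fpp q M u * Fpp q M v = evalC q (circ_coeff u v) * Fpp q M (u + v)"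
proof -
  have "Fpp q M u * Fpp q M v = (-1) ^ (u + v) * (Fp q M u * Fp q M v)"
    unfolding Fpp_def by (simp add: power_add mult_ac)
  also have "\<dots> = evalC q (circ_coeff u v) * Fpp q M (u + v)"
    unfolding Fp_circ Fpp_def by (simp add: mult_ac)
  finally show ?thesis .
qed

lemma Zp_char: "chr q (Zp q M)"
proof (induction M)
  case 0
  have "Zp q 0 = eps" by (rule ext) (simp add: Zp_def Zq_word_0 eps_def)
  then show ?case using eps_char by simp
next
  case (Suc M)
  have "Zp q (Suc M) = conv (phi (Fpp q M)) (Zp q M)"
  proof (rule ext)
    fix w show "Zp q (Suc M) w = conv (phi (Fpp q M)) (Zp q M) w"
      by (cases w) (simp_all add: conv_phi_left_Nil conv_phi_left_Cons Zp_def Fpp_def Zq_word_Suc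
          power_add algebra_simps)
  qed
  then show ?case using conv_char[OF phi_char[OF Fpp_circ] Suc] by simp
qed

lemma Zq_Lf: "Zq q M X = Lf q (Zq_word q M) X"
  unfolding Zq_def Lf_def ..

lemma psi_mono: "Lf q f (psi_star (mono v)) = (-1) ^ sum_list v * f (rev v)"
  unfolding psi_star_def Lf_linext by (simp add: Lf_scaleC evalC_m1pow)

lemma ZS_word: "Zq q M (wS_word w) = conv (Zq_word q M) (Zp q M) w"
proof (cases "w = []")
  case True then show ?thesis by (simp add: wS_word_def Zq_Lf conv_def Zp_def)
next
  case False
  then show ?thesis
    by (simp add: wS_word_def Zq_Lf conv_def Zp_def Lf_sum Lf_harm_chr[OF Zq_char] psi_mono)
qed

lemma ZSq_Lf: "ZSq q M X = Lf q (conv (Zq_word q M) (Zp q M)) X"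
  unfolding ZSq_def wS_def Zq_Lf Lf_linext using ZS_word[unfolded Zq_Lf] by simp

theorem proposition4p1:
  fixes q :: complex and M :: nat and w w' :: CA
  assumes "0 < norm q" and "norm q < 1" and "M \<ge> 1"
  shows "ZSq q M (harm w w') = ZSq q M w * ZSq q M w'"
  unfolding ZSq_Lf by (rule Lf_harm_chr[OF conv_char[OF Zq_char Zp_char]])

end
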